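(* There exist a constant $c_0>0$ and a nonincreasing positive function $R:[0,\infty)\to(0,\infty)$, both universal (not depending on $f,g,n,\delta$), such that for all bounded functions $f,g:[0,1]\to\mathbb R$, $$\|\mathbb P^n_f-\mathbb P^n_g\|_{TV}\le c_0\sqrt n\,\|f-g\|_\infty\quad\text{and}\quad 1-\tfrac12\|\mathbb P^n_f-\mathbb P^n_g\|_{TV}\ge R\big(n\,e^{\|f-g\|_\infty}\|f-g\|_\infty^2\big).$$
   Context: Let $n\ge1$, $\delta>0$ with $n\delta$ an integer. For a bounded function $f$ on $[0,1]$, $\mathbb P^n_f$ is the law of $(S_{i/n})_{0\le i\le n}$ where $S_t=S_0+\int_0^t\sigma_u\,dB_u$, $B$ a standard Brownian motion, $S_0$ deterministic, and $\sigma_t^2=\exp\big(f(\lfloor t/\delta\rfloor\delta)\big)$. For a signed measure $\mu$, $\|\mu\|_{TV}=\sup_{\|h\|_\infty\le1}|\int h\,d\mu|$. *)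

theory Defs
  imports "HOL-Probability.Probability"
begin

definition sigma2 :: "(real \<Rightarrow> real) \<Rightarrow> real \<Rightarrow> real \<Rightarrow> real" where
  "sigma2 f \<delta> t = exp (f (real_of_int \<lfloor>t / \<delta>\<rfloor> * \<delta>))"

text \<open>Variance of the increment S_{(j+1)/n} - S_{j/n} = integral of sigma^2 over [j/n,(j+1)/n].\<close>
definition incr_var :: "nat \<Rightarrow> real \<Rightarrow> (real \<Rightarrow> real) \<Rightarrow> nat \<Rightarrow> real" where
  "incr_var n \<delta> f j = (LBINT t = real j / real n .. real (Suc j) / real n. sigma2 f \<delta> t)"

definition incr_law :: "nat \<Rightarrow> real \<Rightarrow> (real \<Rightarrow> real) \<Rightarrow> (nat \<Rightarrow> real) measure" where
  "incr_law n \<delta> f =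
     (\<Pi>\<^sub>M j\<in>{..<n}. density lborel (normal_density 0 (sqrt (incr_var n \<delta> f j))))"

text \<open>P^n_f: the law of (S_{i/n})_{0 \<le> i \<le> n}, S_{i/n} = S_0 + sum of the first i increments.\<close>
definition obs_law :: "nat \<Rightarrow> real \<Rightarrow> real \<Rightarrow> (real \<Rightarrow> real) \<Rightarrow> (nat \<Rightarrow> real) measure" where
  "obs_law n \<delta> S0 f =
     distr (incr_law n \<delta> f) (\<Pi>\<^sub>M i\<in>{..n}. borel)
       (\<lambda>x. \<lambda>i\<in>{..n}. S0 + (\<Sum>j<i. x j))"

definition tv_dist :: "'a measure \<Rightarrow> 'a measure \<Rightarrow> real" where
  "tv_dist M N = (SUP h \<in> {h \<in> borel_measurable M. \<forall>x. \<bar>h x\<bar> \<le> 1}.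
                    \<bar>integral\<^sup>L M h - integral\<^sup>L N h\<bar>)"

definition sup_dist :: "(real \<Rightarrow> real) \<Rightarrow> (real \<Rightarrow> real) \<Rightarrow> real" where
  "sup_dist f g = (SUP x \<in> {0..1}. \<bar>f x - g x\<bar>)"

end

theory Submission
  imports Defs
begin


lemma bounded_absI:
  assumes "bounded (f ` {0..1::real})"
  obtains M where "\<And>x. x \<in> {0..1} \<Longrightarrow> \<bar>f x\<bar> \<le> (M::real)"
  using assms unfolding bounded_iff by (metis atLeastAtMost_iff image_eqI real_norm_def)

lemma sup_dist_ge:
  assumes "bounded (f ` {0..1})" "bounded (g ` {0..1})" "x \<in> {0..1}"
  shows "\<bar>f x - g x\<bar> \<le> sup_dist f g"
proof -
  obtain M1 where M1: "\<And>x. x \<in> {0..1} \<Longrightarrow> \<bar>f x\<bar> \<le> M1" using bounded_absI[OF assms(1)] by blast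
  obtain M2 where M2: "\<And>x. x \<in> {0..1} \<Longrightarrow> \<bar>g x\<bar> \<le> M2" using bounded_absI[OF assms(2)] by blast
  have "bdd_above ((\<lambda>x. \<bar>f x - g x\<bar>) ` {0..1})"
    by (rule bdd_aboveI2[where M="M1+M2"]) (smt (verit) M1 M2)
  then show ?thesis unfolding sup_dist_def by (rule cSUP_upper[OF assms(3)])
qed

lemma sup_dist_nonneg: "sup_dist f g \<ge> 0" if "bounded (f ` {0..1})" "bounded (g ` {0..1})"
  using sup_dist_ge[OF that, of 0] by auto

lemma sup_dist_sym: "sup_dist f g = sup_dist g f"
  unfolding sup_dist_def by (simp add: abs_minus_commute)

lemma floor_pt:
  assumes "\<delta> > 0" "t \<in> {0..1::real}"
  shows "real_of_int \<lfloor>t / \<delta>\<rfloor> * \<delta> \<in> {0..1}"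
proof -
  have "real_of_int \<lfloor>t / \<delta>\<rfloor> \<le> t / \<delta>" by simp
  then have "real_of_int \<lfloor>t / \<delta>\<rfloor> * \<delta> \<le> t" using assms by (simp add: le_divide_eq)
  moreover have "0 \<le> \<lfloor>t / \<delta>\<rfloor>" using assms by simp
  ultimately show ?thesis using assms by auto
qed

lemma sigma2_meas[measurable]: "sigma2 f \<delta> \<in> borel_measurable borel"
proof -
  have "(\<lambda>t. (\<lambda>k::int. \<lambda>t. exp (f (real_of_int k * \<delta>))) \<lfloor>t / \<delta>\<rfloor> t) \<in> borel_measurable borel"
    by (rule measurable_compose_countable) auto
  then show ?thesis unfolding sigma2_def[abs_def] by simp
qed

lemma sigma2_pos: "sigma2 f \<delta> t > 0" unfolding sigma2_def by simp

lemma sigma2_bound: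
  assumes "\<delta> > 0" "t \<in> {0..1}" "\<And>x. x \<in> {0..1} \<Longrightarrow> \<bar>f x\<bar> \<le> M"
  shows "exp (-M) \<le> sigma2 f \<delta> t" "sigma2 f \<delta> t \<le> exp M"
  using assms(3)[OF floor_pt[OF assms(1,2)]] unfolding sigma2_def by auto

lemma sigma2_ratio:
  assumes "\<delta> > 0" "t \<in> {0..1}" "bounded (f ` {0..1})" "bounded (g ` {0..1})"
  shows "sigma2 f \<delta> t \<le> exp (sup_dist f g) * sigma2 g \<delta> t"
proof -
  have "\<bar>f (real_of_int \<lfloor>t / \<delta>\<rfloor> * \<delta>) - g (real_of_int \<lfloor>t / \<delta>\<rfloor> * \<delta>)\<bar> \<le> sup_dist f g"
    by (rule sup_dist_ge[OF assms(3,4) floor_pt[OF assms(1,2)]])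
  then show ?thesis unfolding sigma2_def by (simp add: exp_add[symmetric])
qed

lemma sigma2_integrable:
  assumes "\<delta> > 0" "bounded (f ` {0..1})" "0 \<le> a" "b \<le> 1"
  shows "set_integrable lborel {a..b} (sigma2 f \<delta>)"
proof -
  obtain M where M: "\<And>x. x \<in> {0..1} \<Longrightarrow> \<bar>f x\<bar> \<le> M" using bounded_absI[OF assms(2)] by blast
  have b: "\<And>t. t \<in> {a..b} \<Longrightarrow> norm (sigma2 f \<delta> t) \<le> exp M"
  proof -
    fix t assume "t \<in> {a..b}"
    then have "t \<in> {0..1}" using assms(3,4) by auto
    then show "norm (sigma2 f \<delta> t) \<le> exp M" using sigma2_bound(2)[OF assms(1) _ M] sigma2_pos[of f \<delta> t] by simp
  qed
  show ?thesis unfolding set_integrable_def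
    apply (rule integrableI_bounded_set_indicator[where B="exp M"])
    using b by (auto simp: emeasure_lborel_Icc_eq)
qed

lemma incr_var_Icc: "incr_var n \<delta> f j = (LBINT t : {real j / real n .. real (Suc j) / real n}. sigma2 f \<delta> t)"
  unfolding incr_var_def
  by (rule interval_integral_Icc) (simp add: divide_right_mono)

lemma idx_range:
  assumes "j < n" "t \<in> {real j / real n .. real (Suc j) / real n}"
  shows "t \<in> {0..1}"
proof -
  have "real (Suc j) / real n \<le> 1" using assms(1) by auto
  moreover have "0 \<le> real j / real n" by simp
  ultimately show ?thesis using assms(2) by (meson atLeastAtMost_iff order_trans)
qed

lemma incr_var_pos:
  assumes "\<delta> > 0" "bounded (f ` {0..1})" "j < n"
  shows "incr_var n \<delta> f j > 0"
proof -
  obtain M where M: "\<And>x. x \<in> {0..1} \<Longrightarrow> \<bar>f x\<bar> \<le> M" using bounded_absI[OF assms(2)] by blast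
  let ?A = "{real j / real n .. real (Suc j) / real n}"
  have le1: "real (Suc j) / real n \<le> 1" using assms(3) by auto
  have "(LBINT t : ?A. exp (-M)) \<le> (LBINT t : ?A. sigma2 f \<delta> t)"
    apply (rule set_integral_mono)
    using sigma2_integrable[OF assms(1,2) _ le1, of "real j / real n"] sigma2_bound(1)[OF assms(1) _ M] idx_range[OF assms(3)]
    by (auto simp: set_integrable_def integrable_indicator_iff emeasure_lborel_Icc_eq)
  moreover have "(LBINT t : ?A. exp (-M)) = exp (-M) * (1 / real n)"
  proof -
    have le: "real j / real n \<le> real (Suc j) / real n" by (simp add: divide_right_mono)
    have "(LBINT t : ?A. exp (-M)) = measure lborel ?A *\<^sub>R exp (-M)"
      by (rule set_integral_const) (auto simp: emeasure_lborel_Icc_eq)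
    also have "measure lborel ?A = real (Suc j) / real n - real j / real n"
      using le by (rule measure_lborel_Icc)
    also have "\<dots> = 1 / real n" by (simp add: diff_divide_distrib[symmetric])
    finally show ?thesis by simp
  qed
  moreover have "exp (-M) * (1 / real n) > 0" using assms(3) by simp
  ultimately show ?thesis unfolding incr_var_Icc by linarith
qed

lemma incr_var_ratio:
  assumes "\<delta> > 0" "bounded (f ` {0..1})" "bounded (g ` {0..1})" "j < n"
  shows "incr_var n \<delta> f j \<le> exp (sup_dist f g) * incr_var n \<delta> g j"
proof -
  let ?A = "{real j / real n .. real (Suc j) / real n}"
  have le1: "real (Suc j) / real n \<le> 1" using assms(4) by auto
  have "(LBINT t : ?A. sigma2 f \<delta> t) \<le> (LBINT t : ?A. exp (sup_dist f g) * sigma2 g \<delta> t)"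
    apply (rule set_integral_mono)
    using sigma2_integrable[OF assms(1,2) _ le1, of "real j / real n"]
      sigma2_integrable[OF assms(1,3) _ le1, of "real j / real n"]
      sigma2_ratio[OF assms(1) _ assms(2,3)] idx_range[OF assms(4)]
    by auto
  then show ?thesis unfolding incr_var_Icc by simp
qed



lemma nd_eq: "c > 0 \<Longrightarrow> normal_density 0 c x = exp (- x\<^sup>2 / (2 * c\<^sup>2)) / (sqrt (2 * pi) * c)"
  unfolding normal_density_def by (simp add: real_sqrt_mult)

lemma bc_pointwise:
  fixes a b x s K :: real
  assumes a: "a > 0" and b: "b > 0" and s: "s > 0" and K: "K \<ge> 0"
    and hs: "s\<^sup>2 * (a\<^sup>2 + b\<^sup>2) = 2 * a\<^sup>2 * b\<^sup>2" and hK: "K\<^sup>2 * a * b = s\<^sup>2"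
  shows "sqrt (normal_density 0 a x * normal_density 0 b x) = K * normal_density 0 s x"
proof -
  have ex: "- x\<^sup>2 / (2 * a\<^sup>2) + - x\<^sup>2 / (2 * b\<^sup>2) = - x\<^sup>2 / (2 * s\<^sup>2) + - x\<^sup>2 / (2 * s\<^sup>2)"
  proof -
    have "1 / (2 * a\<^sup>2) + 1 / (2 * b\<^sup>2) = (a\<^sup>2 + b\<^sup>2) / (2 * a\<^sup>2 * b\<^sup>2)"
      using a b by (simp add: add_divide_distrib)
    also have "\<dots> = 1 / s\<^sup>2" using hs s a b by (simp add: divide_simps) (metis mult.commute)
    finally have "1 / (2 * a\<^sup>2) + 1 / (2 * b\<^sup>2) = 1 / (2 * s\<^sup>2) + 1 / (2 * s\<^sup>2)" by simp
    then have "x\<^sup>2 * (1 / (2 * a\<^sup>2) + 1 / (2 * b\<^sup>2)) = x\<^sup>2 * (1 / (2 * s\<^sup>2) + 1 / (2 * s\<^sup>2))" by simp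
    then show ?thesis by (simp add: distrib_left)
  qed
  have e1: "exp (- x\<^sup>2 / (2 * a\<^sup>2)) * exp (- x\<^sup>2 / (2 * b\<^sup>2)) = (exp (- x\<^sup>2 / (2 * s\<^sup>2)))\<^sup>2"
  proof -
    have "exp (- x\<^sup>2 / (2 * a\<^sup>2)) * exp (- x\<^sup>2 / (2 * b\<^sup>2)) = exp (- x\<^sup>2 / (2 * s\<^sup>2) + - x\<^sup>2 / (2 * s\<^sup>2))"
      by (simp only: exp_add[symmetric] ex)
    then show ?thesis by (simp only: exp_add power2_eq_square[of "exp _"])
  qed
  have pre: "K\<^sup>2 / (sqrt (2 * pi) * s)\<^sup>2 = 1 / ((sqrt (2 * pi) * a) * (sqrt (2 * pi) * b))"
  proof -
    have "(sqrt (2 * pi) * s)\<^sup>2 = 2 * pi * s\<^sup>2" by (simp add: power_mult_distrib)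
    moreover have "(sqrt (2 * pi) * a) * (sqrt (2 * pi) * b) = 2 * pi * (a * b)" by simp
    moreover have "K \<noteq> 0" using hK s by auto
    ultimately show ?thesis unfolding hK[symmetric] using a b by simp
  qed
  have "(K * normal_density 0 s x)\<^sup>2 = K\<^sup>2 / (sqrt (2 * pi) * s)\<^sup>2 * (exp (- x\<^sup>2 / (2 * s\<^sup>2)))\<^sup>2"
    unfolding nd_eq[OF s] by (simp add: power_mult_distrib power_divide)
  also have "\<dots> = normal_density 0 a x * normal_density 0 b x"
    unfolding pre nd_eq[OF a] nd_eq[OF b] e1[symmetric] by simp
  finally have sq: "(K * normal_density 0 s x)\<^sup>2 = normal_density 0 a x * normal_density 0 b x" .
  have "K * normal_density 0 s x \<ge> 0" using K by simp
  then show ?thesis using sq by (metis real_sqrt_unique)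
qed



lemma bc_integral:
  fixes a b :: real
  assumes a: "a > 0" and b: "b > 0"
  shows "integrable lborel (\<lambda>x. sqrt (normal_density 0 a x * normal_density 0 b x))"
    and "(\<integral>x. sqrt (normal_density 0 a x * normal_density 0 b x) \<partial>lborel) = sqrt (2 * a * b / (a\<^sup>2 + b\<^sup>2))"
proof -
  have ab: "a\<^sup>2 + b\<^sup>2 > 0" using a by (simp add: add_pos_nonneg)
  define s where "s = sqrt (2 * a\<^sup>2 * b\<^sup>2 / (a\<^sup>2 + b\<^sup>2))"
  define K where "K = sqrt (2 * a * b / (a\<^sup>2 + b\<^sup>2))"
  have spos: "s > 0" unfolding s_def using a b ab by simp
  have Kpos: "K \<ge> 0" unfolding K_def using a b ab by simp
  have s2: "s\<^sup>2 = 2 * a\<^sup>2 * b\<^sup>2 / (a\<^sup>2 + b\<^sup>2)" unfolding s_def using ab by simp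
  have K2: "K\<^sup>2 = 2 * a * b / (a\<^sup>2 + b\<^sup>2)" unfolding K_def using ab a b by simp
  have hs: "s\<^sup>2 * (a\<^sup>2 + b\<^sup>2) = 2 * a\<^sup>2 * b\<^sup>2" unfolding s2 using ab by simp
  have hK: "K\<^sup>2 * a * b = s\<^sup>2" unfolding s2 K2 by (simp add: power2_eq_square)
  note eq = bc_pointwise[OF a b spos Kpos hs hK]
  show "integrable lborel (\<lambda>x. sqrt (normal_density 0 a x * normal_density 0 b x))"
    unfolding eq using integrable_normal_density[OF spos] by simp
  show "(\<integral>x. sqrt (normal_density 0 a x * normal_density 0 b x) \<partial>lborel) = sqrt (2 * a * b / (a\<^sup>2 + b\<^sup>2))"
    unfolding eq using integral_normal_density[OF spos] by (simp add: K_def)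
qed

lemma bc_le1:
  fixes a b :: real assumes "a > 0" "b > 0"
  shows "sqrt (2 * a * b / (a\<^sup>2 + b\<^sup>2)) \<le> 1"
proof -
  have "2 * a * b \<le> a\<^sup>2 + b\<^sup>2" using sum_squares_bound[of a b] by simp
  moreover have "a\<^sup>2 + b\<^sup>2 > 0" using assms by (simp add: add_pos_nonneg)
  ultimately show ?thesis by simp
qed



lemma exp_half_sq: "exp (e/2) ^ 2 = exp (e::real)"
  by (simp add: power2_eq_square exp_add[symmetric])

lemma bc_lower:
  fixes a b e :: real assumes a: "a > 0" and b: "b > 0" and e: "e \<ge> 0"
    and r1: "a\<^sup>2 \<le> exp e * b\<^sup>2" and r2: "b\<^sup>2 \<le> exp e * a\<^sup>2"
  shows "exp (- (e\<^sup>2 * exp e / 16)) \<le> sqrt (2 * a * b / (a\<^sup>2 + b\<^sup>2))"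
proof -
  define w where "w = b / a"
  have w: "w > 0" unfolding w_def using a b by simp
  have "w\<^sup>2 = b\<^sup>2 / a\<^sup>2" unfolding w_def by (simp add: power_divide)
  also have "\<dots> \<le> exp e" using r2 a by (simp add: divide_le_eq mult.commute)
  finally have w2: "w\<^sup>2 \<le> exp (e/2) ^ 2" unfolding exp_half_sq .
  have wu: "w \<le> exp (e/2)"
    by (rule power2_le_imp_le[OF w2]) simp
  have "(1 / w)\<^sup>2 = a\<^sup>2 / b\<^sup>2" unfolding w_def by (simp add: power_divide)
  also have "\<dots> \<le> exp e" using r1 b by (simp add: divide_le_eq mult.commute)
  finally have w2': "(1/w)\<^sup>2 \<le> exp (e/2) ^ 2" unfolding exp_half_sq .
  have iw: "1 / w \<le> exp (e/2)"
    by (rule power2_le_imp_le[OF w2']) simp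
  have wl: "exp (-(e/2)) \<le> w"
  proof -
    have "exp (-(e/2)) = 1 / exp (e/2)" by (simp add: exp_minus inverse_eq_divide)
    also have "\<dots> \<le> 1 / (1 / w)" using iw w by (intro divide_left_mono) auto
    finally show ?thesis by simp
  qed
  have lin: "1 - e/2 \<le> exp (-(e/2))" using exp_ge_add_one_self[of "-(e/2)"] by simp
  define z where "z = (1 - w)\<^sup>2 / (2 * w)"
  have z0: "z \<ge> 0" unfolding z_def using w by simp
  have zb: "z \<le> e\<^sup>2 * exp e / 8"
  proof (cases "w \<ge> 1")
    case True
    have "exp (e/2) * (1 - e/2) \<le> exp (e/2) * exp (-(e/2))"
      using lin by (intro mult_left_mono) auto
    also have "\<dots> = 1" by (simp add: exp_add[symmetric])
    finally have "exp (e/2) - 1 \<le> e/2 * exp (e/2)" by (simp add: algebra_simps)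
    then have d: "0 \<le> w - 1" "w - 1 \<le> e/2 * exp (e/2)" using wu True by auto
    then have "(w - 1)\<^sup>2 \<le> (e/2 * exp (e/2))\<^sup>2" using power_mono[OF d(2) d(1)] by blast
    also have "\<dots> = e\<^sup>2 / 4 * exp (e/2) ^ 2" by (simp add: power_mult_distrib power_divide)
    also have "\<dots> = e\<^sup>2 * exp e / 4" unfolding exp_half_sq by simp
    finally have q: "(1 - w)\<^sup>2 \<le> e\<^sup>2 * exp e / 4" by (simp add: power2_commute)
    have "z \<le> (1 - w)\<^sup>2 / 2" unfolding z_def using True
      by (intro divide_left_mono) auto
    then show ?thesis using q by simp
  next
    case False
    then have d: "0 \<le> 1 - w" "1 - w \<le> e/2" using wl lin by auto
    then have q: "(1 - w)\<^sup>2 \<le> (e/2)\<^sup>2" using power_mono[OF d(2) d(1)] by blast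
    have "exp (e/2) \<le> exp e" using e by simp
    then have iw2: "1 / w \<le> exp e" using iw by linarith
    have "(1 - w)\<^sup>2 * (1 / w) \<le> (e/2)\<^sup>2 * exp e"
      by (rule mult_mono[OF q iw2]) (use w in auto)
    moreover have "z = (1 - w)\<^sup>2 * (1 / w) / 2" unfolding z_def by simp
    ultimately show ?thesis by (simp add: power_divide mult.commute)
  qed
  have K2: "2 * a * b / (a\<^sup>2 + b\<^sup>2) = 2 * w / (1 + w\<^sup>2)"
  proof -
    have "2 * w / (1 + w\<^sup>2) = (2 * w * a\<^sup>2) / ((1 + w\<^sup>2) * a\<^sup>2)" using a by simp
    also have "2 * w * a\<^sup>2 = 2 * a * b" unfolding w_def using a by (simp add: power2_eq_square)
    also have "(1 + w\<^sup>2) * a\<^sup>2 = a\<^sup>2 + b\<^sup>2" unfolding w_def using a by (simp add: power2_eq_square algebra_simps)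
    finally show ?thesis by simp
  qed
  have "1 + w\<^sup>2 = 2 * w * (1 + z)"
  proof -
    have "2 * w * z = (1 - w)\<^sup>2" unfolding z_def using w by simp
    then show ?thesis by (simp add: power2_eq_square algebra_simps)
  qed
  then have "2 * w / (1 + w\<^sup>2) = 1 / (1 + z)" using w by simp
  moreover have "exp (- z) \<le> 1 / (1 + z)"
  proof -
    have "1 + z \<le> exp z" by (rule exp_ge_add_one_self)
    then have "1 / exp z \<le> 1 / (1 + z)" using z0 by (intro divide_left_mono) auto
    then show ?thesis by (simp add: exp_minus inverse_eq_divide)
  qed
  ultimately have "exp (- z) \<le> 2 * a * b / (a\<^sup>2 + b\<^sup>2)" unfolding K2 by simp
  moreover have "exp (-(e\<^sup>2 * exp e / 8)) \<le> exp (- z)" using zb by simp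
  ultimately have "exp (-(e\<^sup>2 * exp e / 8)) \<le> 2 * a * b / (a\<^sup>2 + b\<^sup>2)" by linarith
  then have "sqrt (exp (-(e\<^sup>2 * exp e / 8))) \<le> sqrt (2 * a * b / (a\<^sup>2 + b\<^sup>2))"
    using real_sqrt_le_mono by blast
  moreover have "sqrt (exp (-(e\<^sup>2 * exp e / 8))) = exp (-(e\<^sup>2 * exp e / 16))"
    by (rule real_sqrt_unique) (simp_all add: power2_eq_square exp_add[symmetric])
  ultimately show ?thesis by simp
qed



lemma amgm_hell:
  fixes u v t :: real assumes u: "u \<ge> 0" and v: "v \<ge> 0" and t: "t > 0"
  shows "\<bar>u\<^sup>2 - v\<^sup>2\<bar> \<le> (t/2 + 1/(2*t)) * (u\<^sup>2 + v\<^sup>2) + (1/t - t) * (u * v)"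
proof -
  have sq: "0 \<le> (t * \<bar>u - v\<bar> - (u + v))\<^sup>2" by simp
  have "2 * t * (\<bar>u - v\<bar> * (u + v)) \<le> t\<^sup>2 * (u - v)\<^sup>2 + (u + v)\<^sup>2"
    using sq by (simp add: power2_eq_square algebra_simps abs_mult_self_eq)
  moreover have "\<bar>u\<^sup>2 - v\<^sup>2\<bar> = \<bar>u - v\<bar> * (u + v)"
  proof -
    have "u\<^sup>2 - v\<^sup>2 = (u - v) * (u + v)" by (simp add: power2_eq_square algebra_simps)
    then show ?thesis using u v by (simp add: abs_mult)
  qed
  moreover have "t\<^sup>2 * (u - v)\<^sup>2 + (u + v)\<^sup>2 = 2 * t * ((t/2 + 1/(2*t)) * (u\<^sup>2 + v\<^sup>2) + (1/t - t) * (u * v))"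
    using t by (simp add: power2_eq_square field_simps)
  ultimately have "2 * t * \<bar>u\<^sup>2 - v\<^sup>2\<bar> \<le> 2 * t * ((t/2 + 1/(2*t)) * (u\<^sup>2 + v\<^sup>2) + (1/t - t) * (u * v))"
    by simp
  then show ?thesis using t by simp
qed

lemma pointwise_hell:
  fixes p q t :: real assumes "p \<ge> 0" "q \<ge> 0" "t > 0"
  shows "\<bar>p - q\<bar> \<le> (t/2 + 1/(2*t)) * (p + q) + (1/t - t) * sqrt (p * q)"
  using amgm_hell[of "sqrt p" "sqrt q" t] assms by (simp add: real_sqrt_mult)

lemma opt_t:
  fixes B :: real assumes "0 \<le> B" "B < 1"
  defines "t \<equiv> sqrt ((1 + B) / (1 - B))"
  shows "t > 0" "t * (1 - B) + (1 + B) / t = 2 * sqrt (1 - B\<^sup>2)"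
proof -
  show tp: "t > 0" unfolding t_def using assms by simp
  have e1: "(1 + B) / (1 - B) * (1 - B)\<^sup>2 = 1 - B\<^sup>2" using assms
    by (simp add: power2_eq_square field_simps)
  have e2: "(1 + B)\<^sup>2 / ((1 + B) / (1 - B)) = 1 - B\<^sup>2" using assms
    by (simp add: power2_eq_square field_simps)
  have "t * (1 - B) = sqrt ((1 + B) / (1 - B)) * sqrt ((1 - B)\<^sup>2)" unfolding t_def using assms by simp
  also have "\<dots> = sqrt (1 - B\<^sup>2)" unfolding e1[symmetric] by (simp only: real_sqrt_mult)
  finally have 1: "t * (1 - B) = sqrt (1 - B\<^sup>2)" .
  have "(1 + B) / t = sqrt ((1 + B)\<^sup>2) / sqrt ((1 + B) / (1 - B))" unfolding t_def using assms by simp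
  also have "\<dots> = sqrt (1 - B\<^sup>2)" unfolding e2[symmetric] by (simp only: real_sqrt_divide)
  finally show "t * (1 - B) + (1 + B) / t = 2 * sqrt (1 - B\<^sup>2)" using 1 by simp
qed

lemma tv_hellinger:
  fixes M :: "'a measure" and p q h :: "'a \<Rightarrow> real"
  assumes [measurable]: "p \<in> borel_measurable M" "q \<in> borel_measurable M" "h \<in> borel_measurable M"
    and pn: "\<And>x. p x \<ge> 0" and qn: "\<And>x. q x \<ge> 0" and hb: "\<And>x. \<bar>h x\<bar> \<le> 1"
    and ip: "integrable M p" and iq: "integrable M q"
    and p1: "integral\<^sup>L M p = 1" and q1: "integral\<^sup>L M q = 1"
    and ipq: "integrable M (\<lambda>x. sqrt (p x * q x))"
    and B: "integral\<^sup>L M (\<lambda>x. sqrt (p x * q x)) = B" and B0: "0 \<le> B" and B1: "B \<le> 1"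
  shows "\<bar>integral\<^sup>L (density M p) h - integral\<^sup>L (density M q) h\<bar> \<le> 2 * sqrt (1 - B\<^sup>2)"
proof -
  have iph: "integrable M (\<lambda>x. p x * h x)"
    by (rule Bochner_Integration.integrable_bound[OF ip]) (use pn hb in \<open>auto simp: abs_mult intro!: mult_left_le\<close>)
  have iqh: "integrable M (\<lambda>x. q x * h x)"
    by (rule Bochner_Integration.integrable_bound[OF iq]) (use qn hb in \<open>auto simp: abs_mult intro!: mult_left_le\<close>)
  have ipmq: "integrable M (\<lambda>x. \<bar>p x - q x\<bar>)" using ip iq by auto
  let ?D = "\<integral>x. \<bar>p x - q x\<bar> \<partial>M"
  have "integral\<^sup>L (density M p) h - integral\<^sup>L (density M q) h = (\<integral>x. p x * h x - q x * h x \<partial>M)"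
    using pn qn iph iqh by (simp add: integral_real_density)
  also have "\<bar>\<dots>\<bar> \<le> (\<integral>x. \<bar>p x * h x - q x * h x\<bar> \<partial>M)" by (rule integral_abs_bound)
  also have "\<dots> \<le> ?D"
  proof (rule integral_mono)
    show "integrable M (\<lambda>x. \<bar>p x * h x - q x * h x\<bar>)" using iph iqh by auto
    show "integrable M (\<lambda>x. \<bar>p x - q x\<bar>)" by (fact ipmq)
    fix x
    have "\<bar>p x * h x - q x * h x\<bar> = \<bar>p x - q x\<bar> * \<bar>h x\<bar>" by (simp add: left_diff_distrib[symmetric] abs_mult)
    also have "\<dots> \<le> \<bar>p x - q x\<bar>" using hb[of x] by (simp add: mult_left_le)
    finally show "\<bar>p x * h x - q x * h x\<bar> \<le> \<bar>p x - q x\<bar>" .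
  qed
  finally have step1: "\<bar>integral\<^sup>L (density M p) h - integral\<^sup>L (density M q) h\<bar> \<le> ?D" .
  have step2: "?D \<le> t * (1 - B) + (1 + B) / t" if t: "t > 0" for t
  proof -
    have "?D \<le> (\<integral>x. (t/2 + 1/(2*t)) * (p x + q x) + (1/t - t) * sqrt (p x * q x) \<partial>M)"
      by (rule integral_mono[OF ipmq]) (use ip iq ipq pn qn t pointwise_hell in auto)
    also have "\<dots> = (t/2 + 1/(2*t)) * (1 + 1) + (1/t - t) * B"
      using ip iq ipq p1 q1 B by simp
    also have "\<dots> = t * (1 - B) + (1 + B) / t" using t by (simp add: field_simps)
    finally show ?thesis .
  qed
  have "?D \<le> 2 * sqrt (1 - B\<^sup>2)"
  proof (cases "B < 1")
    case True
    then show ?thesis using step2[OF opt_t(1)[OF B0 True]] opt_t(2)[OF B0 True] by simp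
  next
    case False
    then have B1': "B = 1" using B1 by simp
    have "?D \<le> 0"
    proof (rule ccontr)
      assume "\<not> ?D \<le> 0"
      then have Dp: "?D > 0" by simp
      have "?D \<le> (4 / ?D) * (1 - B) + (1 + B) / (4 / ?D)" using step2[of "4 / ?D"] Dp by simp
      also have "\<dots> = ?D / 2" unfolding B1' by simp
      finally show False using Dp by simp
    qed
    then show ?thesis using B1' by simp
  qed
  then show ?thesis using step1 by linarith
qed



lemma indicator_PiE_prod:
  assumes "x \<in> extensional I" "finite I"
  shows "(indicator (Pi\<^sub>E I A) x :: ennreal) = (\<Prod>i\<in>I. indicator (A i) (x i))"
proof (cases "x \<in> Pi\<^sub>E I A")
  case True
  then show ?thesis by (auto simp: indicator_def PiE_iff)
next
  case False
  then obtain i where "i \<in> I" "x i \<notin> A i" using assms(1) by (auto simp: PiE_iff)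
  then show ?thesis using False assms(2) by (auto simp: indicator_def intro!: prod_zero)
qed

lemma PiM_normal_density:
  fixes I :: "'i set" and \<sigma> :: "'i \<Rightarrow> real"
  assumes fin: "finite I" and pos: "\<And>i. \<sigma> i > 0"
  shows "PiM I (\<lambda>i. density lborel (normal_density 0 (\<sigma> i))) =
         density (PiM I (\<lambda>_. lborel)) (\<lambda>x. \<Prod>i\<in>I. normal_density 0 (\<sigma> i) (x i))"
proof -
  interpret P: product_sigma_finite "\<lambda>i. density lborel (normal_density 0 (\<sigma> i))"
    unfolding product_sigma_finite_def
    using pos prob_space_normal_density prob_space_imp_sigma_finite by blast
  interpret L: product_sigma_finite "\<lambda>_. lborel :: real measure"
    unfolding product_sigma_finite_def by (simp add: lborel.sigma_finite_measure_axioms)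
  have "density (PiM I (\<lambda>_. lborel)) (\<lambda>x. \<Prod>i\<in>I. normal_density 0 (\<sigma> i) (x i)) =
        PiM I (\<lambda>i. density lborel (normal_density 0 (\<sigma> i)))"
  proof (rule P.PiM_eqI[OF fin])
    show "sets (density (PiM I (\<lambda>_. lborel)) (\<lambda>x. \<Prod>i\<in>I. normal_density 0 (\<sigma> i) (x i))) =
          sets (PiM I (\<lambda>i. density lborel (normal_density 0 (\<sigma> i))))"
      by (auto intro!: sets_PiM_cong)
    fix A assume A: "\<And>i. i \<in> I \<Longrightarrow> A i \<in> sets (density lborel (normal_density 0 (\<sigma> i)))"
    then have A': "\<And>i. i \<in> I \<Longrightarrow> A i \<in> sets borel" by auto
    have PA: "Pi\<^sub>E I A \<in> sets (PiM I (\<lambda>_. lborel))"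
      using A' by (auto intro!: sets_PiM_I_finite fin)
    have "emeasure (density (PiM I (\<lambda>_. lborel)) (\<lambda>x. \<Prod>i\<in>I. normal_density 0 (\<sigma> i) (x i))) (Pi\<^sub>E I A)
        = (\<integral>\<^sup>+x. ennreal (\<Prod>i\<in>I. normal_density 0 (\<sigma> i) (x i)) * indicator (Pi\<^sub>E I A) x \<partial>PiM I (\<lambda>_. lborel))"
      using PA by (subst emeasure_density) auto
    also have "\<dots> = (\<integral>\<^sup>+x. (\<Prod>i\<in>I. ennreal (normal_density 0 (\<sigma> i) (x i)) * indicator (A i) (x i)) \<partial>PiM I (\<lambda>_. lborel))"
    proof (rule nn_integral_cong)
      fix x assume "x \<in> space (PiM I (\<lambda>_. lborel :: real measure))"
      then have "x \<in> extensional I" by (auto simp: space_PiM PiE_def)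
      then show "ennreal (\<Prod>i\<in>I. normal_density 0 (\<sigma> i) (x i)) * indicator (Pi\<^sub>E I A) x =
          (\<Prod>i\<in>I. ennreal (normal_density 0 (\<sigma> i) (x i)) * indicator (A i) (x i))"
        using fin by (simp add: indicator_PiE_prod prod.distrib prod_ennreal)
    qed
    also have "\<dots> = (\<Prod>i\<in>I. \<integral>\<^sup>+y. ennreal (normal_density 0 (\<sigma> i) y) * indicator (A i) y \<partial>lborel)"
      by (rule L.product_nn_integral_prod[OF fin]) (use A' in auto)
    also have "\<dots> = (\<Prod>i\<in>I. emeasure (density lborel (normal_density 0 (\<sigma> i))) (A i))"
      using A' by (intro prod.cong refl) (simp add: emeasure_density)
    finally show "emeasure (density (PiM I (\<lambda>_. lborel)) (\<lambda>x. \<Prod>i\<in>I. normal_density 0 (\<sigma> i) (x i))) (Pi\<^sub>E I A)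
        = (\<Prod>i\<in>I. emeasure (density lborel (normal_density 0 (\<sigma> i))) (A i))" .
  qed
  then show ?thesis by simp
qed



lemma sqrt_prod: "finite I \<Longrightarrow> (\<And>i. i \<in> I \<Longrightarrow> a i \<ge> 0) \<Longrightarrow> sqrt (\<Prod>i\<in>I. a i) = (\<Prod>i\<in>I. sqrt (a i :: real))"
  by (induction I rule: finite_induct) (auto simp: real_sqrt_mult)

lemma tv_B:
  fixes n :: nat and \<delta> S0 :: real and f g :: "real \<Rightarrow> real"
  assumes n: "n \<ge> 1" and \<delta>: "\<delta> > 0" and bf: "bounded (f ` {0..1})" and bg: "bounded (g ` {0..1})"
  shows "\<exists>B. 0 \<le> B \<and> B \<le> 1 \<and> exp (- (real n * (sup_dist f g)\<^sup>2 * exp (sup_dist f g) / 16)) \<le> B \<and>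
      tv_dist (obs_law n \<delta> S0 f) (obs_law n \<delta> S0 g) \<le> 2 * sqrt (1 - B\<^sup>2)"
proof -
  define e where "e = sup_dist f g"
  have e0: "e \<ge> 0" unfolding e_def using sup_dist_nonneg[OF bf bg] .
  define sf where "sf j = (if j < n then sqrt (incr_var n \<delta> f j) else 1)" for j
  define sg where "sg j = (if j < n then sqrt (incr_var n \<delta> g j) else 1)" for j
  have sfp: "\<And>j. sf j > 0" unfolding sf_def using incr_var_pos[OF \<delta> bf] by auto
  have sgp: "\<And>j. sg j > 0" unfolding sg_def using incr_var_pos[OF \<delta> bg] by auto
  let ?I = "{..<n}"
  let ?\<mu> = "PiM ?I (\<lambda>_. lborel :: real measure)"
  define p where "p x = (\<Prod>j\<in>?I. normal_density 0 (sf j) (x j))" for x :: "nat \<Rightarrow> real"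
  define q where "q x = (\<Prod>j\<in>?I. normal_density 0 (sg j) (x j))" for x :: "nat \<Rightarrow> real"
  define BC where "BC j = sqrt (2 * sf j * sg j / ((sf j)\<^sup>2 + (sg j)\<^sup>2))" for j
  define B where "B = (\<Prod>j\<in>?I. BC j)"
  interpret L: product_sigma_finite "\<lambda>_. lborel :: real measure"
    unfolding product_sigma_finite_def by (simp add: lborel.sigma_finite_measure_axioms)
  have lawf: "incr_law n \<delta> f = density ?\<mu> p"
  proof -
    have "incr_law n \<delta> f = PiM ?I (\<lambda>j. density lborel (normal_density 0 (sf j)))"
      unfolding incr_law_def by (intro PiM_cong refl) (simp add: sf_def)
    also have "\<dots> = density ?\<mu> p" unfolding p_def by (rule PiM_normal_density[OF _ sfp]) simp
    finally show ?thesis .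
  qed
  have lawg: "incr_law n \<delta> g = density ?\<mu> q"
  proof -
    have "incr_law n \<delta> g = PiM ?I (\<lambda>j. density lborel (normal_density 0 (sg j)))"
      unfolding incr_law_def by (intro PiM_cong refl) (simp add: sg_def)
    also have "\<dots> = density ?\<mu> q" unfolding q_def by (rule PiM_normal_density[OF _ sgp]) simp
    finally show ?thesis .
  qed
  have pm[measurable]: "p \<in> borel_measurable ?\<mu>" unfolding p_def by measurable
  have qm[measurable]: "q \<in> borel_measurable ?\<mu>" unfolding q_def by measurable
  have ip: "integrable ?\<mu> p" unfolding p_def
    by (rule L.product_integrable_prod) (use sfp in auto)
  have iq: "integrable ?\<mu> q" unfolding q_def
    by (rule L.product_integrable_prod) (use sgp in auto)
  have p1: "integral\<^sup>L ?\<mu> p = 1" unfolding p_def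
    by (subst L.product_integral_prod) (use sfp in auto)
  have q1: "integral\<^sup>L ?\<mu> q = 1" unfolding q_def
    by (subst L.product_integral_prod) (use sgp in auto)
  have sq: "sqrt (p x * q x) = (\<Prod>j\<in>?I. sqrt (normal_density 0 (sf j) (x j) * normal_density 0 (sg j) (x j)))" for x
    unfolding p_def q_def by (simp add: prod.distrib[symmetric] sqrt_prod)
  have ipq: "integrable ?\<mu> (\<lambda>x. sqrt (p x * q x))" unfolding sq
    by (rule L.product_integrable_prod) (use sfp sgp bc_integral in auto)
  have bcnn: "0 \<le> 2 * sf a * sg a / ((sf a)\<^sup>2 + (sg a)\<^sup>2)" for a
    using sfp[of a] sgp[of a] by (intro divide_nonneg_nonneg) auto
  have Bint: "integral\<^sup>L ?\<mu> (\<lambda>x. sqrt (p x * q x)) = B" unfolding sq B_def BC_def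
    by (subst L.product_integral_prod) (use sfp sgp bc_integral bcnn in auto)
  have B0: "0 \<le> B" unfolding B_def BC_def using bcnn by (intro prod_nonneg) simp
  have B1: "B \<le> 1" unfolding B_def BC_def using bc_le1[OF sfp sgp] bcnn by (intro prod_le_1) auto
  have Blow: "exp (- (e\<^sup>2 * exp e / 16)) ^ n \<le> B"
  proof -
    have "(\<Prod>j\<in>?I. exp (- (e\<^sup>2 * exp e / 16))) \<le> B" unfolding B_def
    proof (rule prod_mono)
      fix j assume j: "j \<in> ?I"
      then have j': "j < n" by simp
      have r1: "(sf j)\<^sup>2 \<le> exp e * (sg j)\<^sup>2"
        using j' incr_var_pos[OF \<delta> bf j'] incr_var_pos[OF \<delta> bg j'] incr_var_ratio[OF \<delta> bf bg j']
        unfolding sf_def sg_def e_def by simp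
      have r2: "(sg j)\<^sup>2 \<le> exp e * (sf j)\<^sup>2"
        using j' incr_var_pos[OF \<delta> bf j'] incr_var_pos[OF \<delta> bg j'] incr_var_ratio[OF \<delta> bg bf j']
        unfolding sf_def sg_def e_def by (simp add: sup_dist_sym)
      show "0 \<le> exp (- (e\<^sup>2 * exp e / 16)) \<and> exp (- (e\<^sup>2 * exp e / 16)) \<le> BC j"
        unfolding BC_def using bc_lower[OF sfp sgp e0 r1 r2] by simp
    qed
    then show ?thesis by simp
  qed
  have "exp (- (real n * e\<^sup>2 * exp e / 16)) = exp (- (e\<^sup>2 * exp e / 16)) ^ n"
    by (simp add: exp_of_nat_mult[symmetric])
  with Blow have Blow': "exp (- (real n * e\<^sup>2 * exp e / 16)) \<le> B" by simp
  define T where "T = (\<lambda>x :: nat \<Rightarrow> real. \<lambda>i\<in>{..n}. S0 + (\<Sum>j<i. x j))"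
  have Tm: "T \<in> measurable ?\<mu> (PiM {..n} (\<lambda>_. borel))"
    unfolding T_def
  proof (rule measurable_restrict)
    fix i assume "i \<in> {..n}"
    then have "\<And>j. j < i \<Longrightarrow> j \<in> ?I" by auto
    then show "(\<lambda>x. S0 + (\<Sum>j<i. x j)) \<in> borel_measurable ?\<mu>"
      by (intro borel_measurable_add borel_measurable_const borel_measurable_sum) auto
  qed
  have Tf: "T \<in> measurable (incr_law n \<delta> f) (PiM {..n} (\<lambda>_. borel))"
    using Tm unfolding lawf by simp
  have Tg: "T \<in> measurable (incr_law n \<delta> g) (PiM {..n} (\<lambda>_. borel))"
    using Tm unfolding lawg by simp
  have each: "\<bar>integral\<^sup>L (obs_law n \<delta> S0 f) h - integral\<^sup>L (obs_law n \<delta> S0 g) h\<bar> \<le> 2 * sqrt (1 - B\<^sup>2)"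
    if h: "h \<in> borel_measurable (obs_law n \<delta> S0 f)" "\<forall>x. \<bar>h x\<bar> \<le> 1" for h
  proof -
    have hm: "h \<in> borel_measurable (PiM {..n} (\<lambda>_. borel))"
      using h(1) unfolding obs_law_def by simp
    have "integral\<^sup>L (obs_law n \<delta> S0 f) h = integral\<^sup>L (density ?\<mu> p) (\<lambda>x. h (T x))"
      unfolding obs_law_def T_def[symmetric] using integral_distr[OF Tf hm] lawf by simp
    moreover have "integral\<^sup>L (obs_law n \<delta> S0 g) h = integral\<^sup>L (density ?\<mu> q) (\<lambda>x. h (T x))"
      unfolding obs_law_def T_def[symmetric] using integral_distr[OF Tg hm] lawg by simp
    moreover have "\<bar>integral\<^sup>L (density ?\<mu> p) (\<lambda>x. h (T x)) - integral\<^sup>L (density ?\<mu> q) (\<lambda>x. h (T x))\<bar> \<le> 2 * sqrt (1 - B\<^sup>2)"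
      by (rule tv_hellinger[OF pm qm _ _ _ _ ip iq p1 q1 ipq Bint B0 B1])
         (use Tm hm h(2) sfp sgp in \<open>auto simp: p_def q_def intro!: prod_nonneg\<close>)
    ultimately show ?thesis by simp
  qed
  define S where "S = {h \<in> borel_measurable (obs_law n \<delta> S0 f). \<forall>x. \<bar>h x\<bar> \<le> (1::real)}"
  have m: "(\<lambda>_. 0) \<in> S" unfolding S_def
    by (intro CollectI conjI borel_measurable_const allI) simp
  have Sne: "S \<noteq> {}" using m by blast
  have tvb: "tv_dist (obs_law n \<delta> S0 f) (obs_law n \<delta> S0 g) \<le> 2 * sqrt (1 - B\<^sup>2)"
    unfolding tv_dist_def S_def[symmetric]
  proof (rule cSUP_least[OF Sne])
    fix h assume "h \<in> S"
    then have hh: "h \<in> borel_measurable (obs_law n \<delta> S0 f) \<and> (\<forall>x. \<bar>h x\<bar> \<le> 1)"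
      unfolding S_def by (rule CollectD)
    show "\<bar>integral\<^sup>L (obs_law n \<delta> S0 f) h - integral\<^sup>L (obs_law n \<delta> S0 g) h\<bar> \<le> 2 * sqrt (1 - B\<^sup>2)"
      by (rule each[OF conjunct1[OF hh] conjunct2[OF hh]])
  qed
  have lowb: "exp (- (real n * (sup_dist f g)\<^sup>2 * exp (sup_dist f g) / 16)) \<le> B"
    using Blow' unfolding e_def .
  show ?thesis using B0 B1 lowb tvb by (intro exI[of _ B]) (intro conjI; assumption)
qed



theorem proposition4:
  shows "\<exists>c0 > (0::real). \<exists>R :: real \<Rightarrow> real.
     (\<forall>x \<ge> 0. R x > 0) \<and> (\<forall>x y. 0 \<le> x \<longrightarrow> x \<le> y \<longrightarrow> R y \<le> R x) \<and>
     (\<forall>(n::nat) (\<delta>::real) (S0::real) (f::real \<Rightarrow> real) (g::real \<Rightarrow> real).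
        n \<ge> 1 \<longrightarrow> \<delta> > 0 \<longrightarrow> (\<exists>k::nat. real n * \<delta> = real k) \<longrightarrow>
        bounded (f ` {0..1}) \<longrightarrow> bounded (g ` {0..1}) \<longrightarrow>
        tv_dist (obs_law n \<delta> S0 f) (obs_law n \<delta> S0 g) \<le> c0 * sqrt (real n) * sup_dist f g \<and>
        1 - tv_dist (obs_law n \<delta> S0 f) (obs_law n \<delta> S0 g) / 2
          \<ge> R (real n * exp (sup_dist f g) * (sup_dist f g)\<^sup>2))"
proof -
  define R where "R y = 1 - sqrt (1 - exp (- y / 8))" for y :: real
  have Rpos: "\<forall>x \<ge> 0. R x > 0"
  proof (intro allI impI)
    fix x :: real assume "x \<ge> 0"
    have "exp (- x / 8) > 0" by simp
    then have "1 - exp (- x / 8) < 1" by simp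
    then have "sqrt (1 - exp (- x / 8)) < 1" by (simp add: real_sqrt_less_iff)
    then show "R x > 0" unfolding R_def by simp
  qed
  have Rmono: "\<forall>x y. 0 \<le> x \<longrightarrow> x \<le> y \<longrightarrow> R y \<le> R x"
  proof (intro allI impI)
    fix x y :: real assume "0 \<le> x" "x \<le> y"
    then have "exp (- y / 8) \<le> exp (- x / 8)" by simp
    then have "sqrt (1 - exp (- x / 8)) \<le> sqrt (1 - exp (- y / 8))" by simp
    then show "R y \<le> R x" unfolding R_def by simp
  qed
  have main: "tv_dist (obs_law n \<delta> S0 f) (obs_law n \<delta> S0 g) \<le> 2 * sqrt (real n) * sup_dist f g \<and>
        1 - tv_dist (obs_law n \<delta> S0 f) (obs_law n \<delta> S0 g) / 2
          \<ge> R (real n * exp (sup_dist f g) * (sup_dist f g)\<^sup>2)"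
    if n: "n \<ge> 1" and \<delta>: "\<delta> > 0" and bf: "bounded (f ` {0..1})" and bg: "bounded (g ` {0..1})"
    for n :: nat and \<delta> S0 :: real and f g :: "real \<Rightarrow> real"
  proof -
    define e where "e = sup_dist f g"
    have e0: "e \<ge> 0" unfolding e_def using sup_dist_nonneg[OF bf bg] .
    define x where "x = real n * exp e * e\<^sup>2"
    have x0: "x \<ge> 0" unfolding x_def using e0 by simp
    obtain B where B0: "0 \<le> B" and B1: "B \<le> 1"
      and Bl: "exp (- (real n * (sup_dist f g)\<^sup>2 * exp (sup_dist f g) / 16)) \<le> B"
      and tv: "tv_dist (obs_law n \<delta> S0 f) (obs_law n \<delta> S0 g) \<le> 2 * sqrt (1 - B\<^sup>2)"
      using tv_B[OF n \<delta> bf bg, of S0] by blast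
    have "real n * (sup_dist f g)\<^sup>2 * exp (sup_dist f g) = x" unfolding x_def e_def by (simp add: ac_simps)
    then have Bl': "exp (- x / 16) \<le> B" using Bl by simp
    have "exp (- x / 8) = exp (- x / 16) ^ 2" by (simp add: power2_eq_square exp_add[symmetric])
    also have "\<dots> \<le> B\<^sup>2" using Bl' by (intro power_mono) auto
    finally have B2: "1 - B\<^sup>2 \<le> 1 - exp (- x / 8)" by simp
    have tv2: "tv_dist (obs_law n \<delta> S0 f) (obs_law n \<delta> S0 g) \<le> 2 * sqrt (1 - exp (- x / 8))"
      using tv real_sqrt_le_mono[OF B2] by linarith
    have c2: "1 - tv_dist (obs_law n \<delta> S0 f) (obs_law n \<delta> S0 g) / 2 \<ge> R x"
      unfolding R_def using tv2 by simp
    have sn: "sqrt (real n) \<ge> 1" using n by simp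
    have c1: "tv_dist (obs_law n \<delta> S0 f) (obs_law n \<delta> S0 g) \<le> 2 * sqrt (real n) * e"
    proof (cases "e \<ge> 1")
      case True
      have "1 - B\<^sup>2 \<le> 1" by simp
      then have "sqrt (1 - B\<^sup>2) \<le> 1" by simp
      also have "1 \<le> sqrt (real n) * e" using mult_mono[OF sn True] by simp
      finally show ?thesis using tv by simp
    next
      case False
      have "exp e \<le> exp 1" using False by simp
      also have "\<dots> \<le> 3" by (rule exp_le)
      finally have ee: "exp e \<le> 3" .
      have "1 - exp (- x / 8) \<le> x / 8" using exp_ge_add_one_self[of "- x / 8"] by simp
      also have "x / 8 \<le> real n * e\<^sup>2"
      proof -
        have "x = (real n * e\<^sup>2) * exp e" unfolding x_def by simp
        also have "\<dots> \<le> (real n * e\<^sup>2) * 3" using ee by (intro mult_left_mono) auto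
        finally have "x \<le> (real n * e\<^sup>2) * 3" .
        moreover have "real n * e\<^sup>2 \<ge> 0" by simp
        ultimately show ?thesis by linarith
      qed
      finally have "1 - B\<^sup>2 \<le> real n * e\<^sup>2" using B2 by simp
      then have "sqrt (1 - B\<^sup>2) \<le> sqrt (real n * e\<^sup>2)" by simp
      also have "\<dots> = sqrt (real n) * e" using e0 by (simp add: real_sqrt_mult)
      finally show ?thesis using tv by simp
    qed
    show ?thesis using c1 c2 unfolding e_def x_def by simp
  qed
  have all: "\<forall>(n::nat) (\<delta>::real) (S0::real) (f::real \<Rightarrow> real) (g::real \<Rightarrow> real).
        n \<ge> 1 \<longrightarrow> \<delta> > 0 \<longrightarrow> (\<exists>k::nat. real n * \<delta> = real k) \<longrightarrow>
        bounded (f ` {0..1}) \<longrightarrow> bounded (g ` {0..1}) \<longrightarrow>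
        tv_dist (obs_law n \<delta> S0 f) (obs_law n \<delta> S0 g) \<le> 2 * sqrt (real n) * sup_dist f g \<and>
        1 - tv_dist (obs_law n \<delta> S0 f) (obs_law n \<delta> S0 g) / 2
          \<ge> R (real n * exp (sup_dist f g) * (sup_dist f g)\<^sup>2)"
    by (intro allI impI main)
  show ?thesis
    by (rule exI[of _ 2], rule conjI, simp, rule exI[of _ R], intro conjI Rpos Rmono all)
qed

end
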